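(* Let $X$ be one of the sequence spaces $\ell^p$ ($1\le p\le\infty$), $c$, or $c_0$. Let $a=(a_n)\in\ell^\infty$ with $a_n>0$ for all $n\in\mathbb{N}$, and let $b=(b_n)\in X$. Suppose there exists $k\in X^*$ such that the spectrum of $T_k:=A+bk$ satisfies $\Sigma(T_k)\subseteq H:=\{z\in\mathbb{C}\mid \operatorname{re}(z)\le 0\}$. Then: 1. $(a_n)\in c_0$, and $a_n\neq a_m$ whenever $n\neq m$; 2. $b_n\neq 0$ for all $n\in\mathbb{N}$.
   Context: Sequences are complex valued; $\ell^p$ carries the $\ell^p$-norm, $c$ (convergent sequences) and $c_0$ (null sequences) carry the sup norm. $A:X\to X$ is the diagonal operator $(x_n)\mapsto(a_nx_n)$. For $k\in X^*$, $T_k:X\to X$ is the bounded operator $x\mapsto Ax+(kx)\,b$. $\Sigma(\cdot)$ denotes the spectrum. *)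

theory Defs
  imports "HOL-Analysis.Analysis"
begin

text \<open>The four kinds of sequence
spaces: ell^p for a real exponent p (meaningful for p >= 1), ell^infinity,
c (convergent sequences) and c_0 (null sequences).\<close>

datatype seqspace = Ell real | Ell_inf | Conv | Null

definition valid_space :: "seqspace \<Rightarrow> bool" where
  "valid_space X = (case X of Ell p \<Rightarrow> 1 \<le> p | _ \<Rightarrow> True)"

definition carrier_sp :: "seqspace \<Rightarrow> (nat \<Rightarrow> complex) set" where
  "carrier_sp X = (case X of
      Ell p \<Rightarrow> {x. summable (\<lambda>n. cmod (x n) powr p)}
    | Ell_inf \<Rightarrow> {x. bounded (range x)}
    | Conv \<Rightarrow> {x. convergent x}
    | Null \<Rightarrow> {x. x \<longlonglongrightarrow> 0})"

definition norm_sp :: "seqspace \<Rightarrow> (nat \<Rightarrow> complex) \<Rightarrow> real" where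
  "norm_sp X x = (case X of
      Ell p \<Rightarrow> (\<Sum>n. cmod (x n) powr p) powr (1 / p)
    | _ \<Rightarrow> (SUP n. cmod (x n)))"

definition bounded_functional :: "seqspace \<Rightarrow> ((nat \<Rightarrow> complex) \<Rightarrow> complex) \<Rightarrow> bool" where
  "bounded_functional X k \<longleftrightarrow>
     (\<forall>x\<in>carrier_sp X. \<forall>y\<in>carrier_sp X. k (\<lambda>n. x n + y n) = k x + k y) \<and>
     (\<forall>x\<in>carrier_sp X. \<forall>c. k (\<lambda>n. c * x n) = c * k x) \<and>
     (\<exists>M. \<forall>x\<in>carrier_sp X. cmod (k x) \<le> M * norm_sp X x)"

definition bounded_op :: "seqspace \<Rightarrow> ((nat \<Rightarrow> complex) \<Rightarrow> (nat \<Rightarrow> complex)) \<Rightarrow> bool" where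
  "bounded_op X T \<longleftrightarrow>
     (\<forall>x\<in>carrier_sp X. T x \<in> carrier_sp X) \<and>
     (\<forall>x\<in>carrier_sp X. \<forall>y\<in>carrier_sp X. T (\<lambda>n. x n + y n) = (\<lambda>n. T x n + T y n)) \<and>
     (\<forall>x\<in>carrier_sp X. \<forall>c. T (\<lambda>n. c * x n) = (\<lambda>n. c * T x n)) \<and>
     (\<exists>M. \<forall>x\<in>carrier_sp X. norm_sp X (T x) \<le> M * norm_sp X x)"

definition spectrum_op :: "seqspace \<Rightarrow> ((nat \<Rightarrow> complex) \<Rightarrow> (nat \<Rightarrow> complex)) \<Rightarrow> complex set" where
  "spectrum_op X T = {z. \<not> (\<exists>S. bounded_op X S \<and>
       (\<forall>x\<in>carrier_sp X. S (\<lambda>n. T x n - z * x n) = x) \<and>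
       (\<forall>x\<in>carrier_sp X. (\<lambda>n. T (S x) n - z * S x n) = x))}"

definition diag_op :: "(nat \<Rightarrow> real) \<Rightarrow> (nat \<Rightarrow> complex) \<Rightarrow> (nat \<Rightarrow> complex)" where
  "diag_op a x = (\<lambda>n. complex_of_real (a n) * x n)"

definition T_op :: "(nat \<Rightarrow> real) \<Rightarrow> (nat \<Rightarrow> complex) \<Rightarrow> ((nat \<Rightarrow> complex) \<Rightarrow> complex)
                    \<Rightarrow> (nat \<Rightarrow> complex) \<Rightarrow> (nat \<Rightarrow> complex)" where
  "T_op a b k x = (\<lambda>n. diag_op a x n + k x * b n)"

end

theory Submission
  imports Defs
begin

lemma fin_carrier:
  assumes "\<forall>j. j \<notin> {n,m} \<longrightarrow> x j = 0"
  shows "x \<in> carrier_sp X"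
proof -
  have ev: "x \<longlonglongrightarrow> 0"
  proof (rule tendsto_eventually)
    have "\<forall>j. j \<ge> Suc (max n m) \<longrightarrow> j \<noteq> n \<and> j \<noteq> m" by auto
    then have "\<forall>j\<ge>Suc (max n m). x j = 0" using assms by blast
    then show "eventually (\<lambda>j. x j = 0) sequentially" unfolding eventually_sequentially by blast
  qed
  show ?thesis
  proof (cases X)
    case (Ell p)
    have "summable (\<lambda>j. cmod (x j) powr p)"
      by (rule summable_finite[of "{n,m}"]) (use assms in auto)
    then show ?thesis using Ell by (simp add: carrier_sp_def)
  next
    case Ell_inf
    have "range x \<subseteq> {x n, x m, 0}" using assms by auto
    then have "bounded (range x)"
      by (meson bounded_subset finite.emptyI finite.insertI finite_imp_bounded)
    then show ?thesis using Ell_inf by (simp add: carrier_sp_def)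
  next
    case Conv then show ?thesis using ev by (auto simp: carrier_sp_def convergent_def)
  next
    case Null then show ?thesis using ev by (auto simp: carrier_sp_def)
  qed
qed

lemma bdd_sp:
  assumes "x \<in> carrier_sp X" "\<forall>p. X \<noteq> Ell p"
  shows "bdd_above (range (\<lambda>j. cmod (x j)))"
proof -
  have "bounded (range x)"
  proof (cases X)
    case (Ell p) then show ?thesis using assms by auto
  next
    case Ell_inf then show ?thesis using assms by (simp add: carrier_sp_def)
  next
    case Conv
    then have "Bseq x" using assms by (simp add: carrier_sp_def convergent_imp_Bseq)
    then show ?thesis by (simp add: Bseq_eq_bounded)
  next
    case Null
    then have "convergent x" using assms by (auto simp: carrier_sp_def convergent_def)
    then have "Bseq x" by (simp add: convergent_imp_Bseq)
    then show ?thesis by (simp add: Bseq_eq_bounded)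
  qed
  then obtain B where "\<forall>y\<in>range x. norm y \<le> B" by (auto simp: bounded_iff)
  then show ?thesis by (auto intro!: bdd_aboveI[of _ B])
qed

lemma norm_pos:
  assumes "x \<in> carrier_sp X" "x j \<noteq> 0"
  shows "norm_sp X x > 0"
proof (cases "\<exists>p. X = Ell p")
  case True
  then obtain p where X: "X = Ell p" by auto
  have s: "summable (\<lambda>n. cmod (x n) powr p)" using assms X by (simp add: carrier_sp_def)
  have "0 < (\<Sum>n. cmod (x n) powr p)"
    by (rule suminf_pos2[OF s, of j]) (use assms in auto)
  then show ?thesis using X by (simp add: norm_sp_def)
next
  case False
  then have b: "bdd_above (range (\<lambda>j. cmod (x j)))" using bdd_sp assms by auto
  have "cmod (x j) \<le> (SUP n. cmod (x n))" by (rule cSUP_upper[OF _ b]) auto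
  moreover have "cmod (x j) > 0" using assms by auto
  moreover have "norm_sp X x = (SUP n. cmod (x n))" using False
    by (cases X) (auto simp: norm_sp_def)
  ultimately show ?thesis by linarith
qed

lemma norm_nonneg_sp:
  assumes "x \<in> carrier_sp X"
  shows "norm_sp X x \<ge> 0"
proof (cases "\<exists>p. X = Ell p")
  case True
  then obtain p where X: "X = Ell p" by auto
  then show ?thesis by (simp add: norm_sp_def)
next
  case False
  then have b: "bdd_above (range (\<lambda>j. cmod (x j)))" using bdd_sp assms by auto
  have "cmod (x 0) \<le> (SUP n. cmod (x n))" by (rule cSUP_upper[OF _ b]) auto
  moreover have "norm_sp X x = (SUP n. cmod (x n))" using False
    by (cases X) (auto simp: norm_sp_def)
  ultimately show ?thesis using norm_ge_zero order_trans by metis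
qed

lemma norm_mono_sp:
  assumes "valid_space X" "v \<in> carrier_sp X" "c \<ge> 0" "\<forall>j. cmod (u j) \<le> c * cmod (v j)"
  shows "norm_sp X u \<le> c * norm_sp X v"
proof (cases "\<exists>p. X = Ell p")
  case True
  then obtain p where X: "X = Ell p" by auto
  have p: "p \<ge> 1" using assms(1) X by (simp add: valid_space_def)
  have sg: "summable (\<lambda>n. cmod (v n) powr p)" using assms X by (simp add: carrier_sp_def)
  have le: "cmod (u j) powr p \<le> c powr p * cmod (v j) powr p" for j
  proof -
    have "cmod (u j) powr p \<le> (c * cmod (v j)) powr p"
      by (rule powr_mono2) (use p assms in auto)
    also have "\<dots> = c powr p * cmod (v j) powr p" by (simp add: powr_mult assms)
    finally show ?thesis .
  qed
  have sg2: "summable (\<lambda>n. c powr p * cmod (v n) powr p)" using sg by (rule summable_mult)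
  have sf: "summable (\<lambda>n. cmod (u n) powr p)"
    by (rule summable_comparison_test[OF _ sg2]) (use le in auto)
  have "(\<Sum>n. cmod (u n) powr p) \<le> (\<Sum>n. c powr p * cmod (v n) powr p)"
    by (rule suminf_le[OF _ sf sg2]) (use le in auto)
  also have "\<dots> = c powr p * (\<Sum>n. cmod (v n) powr p)" using sg by (rule suminf_mult)
  finally have "(\<Sum>n. cmod (u n) powr p) powr (1/p) \<le> (c powr p * (\<Sum>n. cmod (v n) powr p)) powr (1/p)"
    by (intro powr_mono2) (use p sf in \<open>auto intro: suminf_nonneg\<close>)
  also have "\<dots> = (c powr p) powr (1/p) * (\<Sum>n. cmod (v n) powr p) powr (1/p)"
    by (simp add: powr_mult)
  also have "(c powr p) powr (1/p) = c" using p assms(3) by (simp add: powr_powr)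
  finally show ?thesis using X by (simp add: norm_sp_def)
next
  case False
  then have b: "bdd_above (range (\<lambda>j. cmod (v j)))" using bdd_sp assms by auto
  have "(SUP n. cmod (u n)) \<le> c * (SUP n. cmod (v n))"
  proof (rule cSUP_least)
    fix j
    have "cmod (v j) \<le> (SUP n. cmod (v n))" by (rule cSUP_upper[OF _ b]) auto
    then show "cmod (u j) \<le> c * (SUP n. cmod (v n))"
      using assms(4) assms(3) by (meson mult_left_mono order_trans)
  qed auto
  moreover have "norm_sp X u = (SUP n. cmod (u n))" "norm_sp X v = (SUP n. cmod (v n))" using False
    by (cases X; auto simp: norm_sp_def)+
  ultimately show ?thesis by simp
qed

lemma ker_vec:
  assumes bf: "bounded_functional X k" and nm: "n \<noteq> m"
  shows "\<exists>y. y \<in> carrier_sp X \<and> k y = 0 \<and> (\<forall>j. j \<notin> {n,m} \<longrightarrow> y j = 0) \<and> (\<exists>j. y j \<noteq> 0)"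
proof -
  define e where "e = (\<lambda>i::nat. \<lambda>j::nat. if j = i then (1::complex) else 0)"
  have ec: "e i \<in> carrier_sp X" for i by (rule fin_carrier[of i i]) (simp add: e_def)
  from bf have add: "\<forall>x\<in>carrier_sp X. \<forall>y\<in>carrier_sp X. k (\<lambda>n. x n + y n) = k x + k y"
    and hom: "\<forall>x\<in>carrier_sp X. \<forall>c. k (\<lambda>n. c * x n) = c * k x"
    unfolding bounded_functional_def by blast+
  show ?thesis
  proof (cases "k (e n) = 0")
    case True
    then show ?thesis using ec[of n] by (intro exI[of _ "e n"]) (auto simp: e_def)
  next
    case False
    define u where "u = (\<lambda>j. k (e m) * e n j)"
    define v where "v = (\<lambda>j. (- k (e n)) * e m j)"
    have uc: "u \<in> carrier_sp X" by (rule fin_carrier[of n m]) (simp add: u_def e_def)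
    have vc: "v \<in> carrier_sp X" by (rule fin_carrier[of n m]) (simp add: v_def e_def)
    have ku: "k u = k (e m) * k (e n)" using hom ec[of n] unfolding u_def by blast
    have kv: "k v = - k (e n) * k (e m)" using hom ec[of m] unfolding v_def by blast
    have ky: "k (\<lambda>j. u j + v j) = 0" using add uc vc ku kv by simp
    have yc: "(\<lambda>j. u j + v j) \<in> carrier_sp X"
      by (rule fin_carrier[of n m]) (simp add: u_def v_def e_def)
    have "u m + v m \<noteq> 0" using nm False by (simp add: u_def v_def e_def)
    moreover have "\<forall>j. j \<notin> {n,m} \<longrightarrow> u j + v j = 0" by (simp add: u_def v_def e_def)
    ultimately show ?thesis using ky yc by (intro exI[of _ "\<lambda>j. u j + v j"]) auto
  qed
qed

theorem theorem1:
  fixes X :: seqspace and a :: "nat \<Rightarrow> real" and b :: "nat \<Rightarrow> complex"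
  assumes "valid_space X"
    and "bounded (range a)"
    and "\<forall>n. a n > 0"
    and "b \<in> carrier_sp X"
    and "\<exists>k. bounded_functional X k \<and>
              spectrum_op X (T_op a b k) \<subseteq> {z. Re z \<le> 0}"
  shows "a \<longlonglongrightarrow> 0 \<and> (\<forall>n m. n \<noteq> m \<longrightarrow> a n \<noteq> a m) \<and> (\<forall>n. b n \<noteq> 0)"
proof -
  obtain k where bf: "bounded_functional X k"
    and spec: "spectrum_op X (T_op a b k) \<subseteq> {z. Re z \<le> 0}" using assms(5) by blast
  have nsp: "\<exists>S. bounded_op X S \<and> (\<forall>x\<in>carrier_sp X. S (\<lambda>n. T_op a b k x n - z * x n) = x) \<and>
       (\<forall>x\<in>carrier_sp X. (\<lambda>n. T_op a b k (S x) n - z * S x n) = x)" if "Re z > 0" for z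
  proof -
    have "z \<notin> spectrum_op X (T_op a b k)" using spec that by force
    then show ?thesis unfolding spectrum_op_def by blast
  qed
  from bf have hom: "\<forall>x\<in>carrier_sp X. \<forall>c. k (\<lambda>n. c * x n) = c * k x"
    unfolding bounded_functional_def by blast
  have zc: "(\<lambda>j. 0::complex) \<in> carrier_sp X" by (rule fin_carrier[of 0 0]) simp
  have k0: "k (\<lambda>j. 0) = 0" using bspec[OF hom zc, rule_format, of 0] by simp
  have dist: "a n \<noteq> a m" if nm: "n \<noteq> m" for n m
  proof
    assume eq: "a n = a m"
    obtain y where yc: "y \<in> carrier_sp X" and ky: "k y = 0"
      and ys: "\<forall>j. j \<notin> {n,m} \<longrightarrow> y j = 0" and ynz: "\<exists>j. y j \<noteq> 0"
      using ker_vec[OF bf nm] by blast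
    obtain S where S1: "\<forall>x\<in>carrier_sp X. S (\<lambda>j. T_op a b k x j - complex_of_real (a n) * x j) = x"
      using nsp[of "complex_of_real (a n)"] assms(3) by auto
    have "(\<lambda>j. T_op a b k y j - complex_of_real (a n) * y j) = (\<lambda>j. 0)"
    proof
      fix j show "T_op a b k y j - complex_of_real (a n) * y j = 0"
        using ys eq ky by (cases "j \<in> {n,m}") (auto simp: T_op_def diag_op_def)
    qed
    moreover have "S (\<lambda>j. T_op a b k y j - complex_of_real (a n) * y j) = y"
      using bspec[OF S1 yc] .
    ultimately have Sy: "S (\<lambda>j. 0) = y" by simp
    have z1: "(\<lambda>j. T_op a b k (\<lambda>j. 0) j - complex_of_real (a n) * 0) = (\<lambda>j. 0)"
      by (simp add: T_op_def diag_op_def k0)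
    have z2: "S (\<lambda>j. T_op a b k (\<lambda>j. 0) j - complex_of_real (a n) * 0) = (\<lambda>j. 0)"
      using bspec[OF S1 zc] by simp
    have "S (\<lambda>j. 0) = (\<lambda>j. 0)" using z1 z2 by simp
    then have "y = (\<lambda>j. 0)" using Sy by simp
    then show False using ynz by auto
  qed
  have bnz: "b n \<noteq> 0" for n
  proof
    assume b0: "b n = 0"
    define e where "e = (\<lambda>j. if j = n then (1::complex) else 0)"
    have ec: "e \<in> carrier_sp X" by (rule fin_carrier[of n n]) (simp add: e_def)
    obtain S where S2: "\<forall>x\<in>carrier_sp X. (\<lambda>j. T_op a b k (S x) j - complex_of_real (a n) * S x j) = x"
      using nsp[of "complex_of_real (a n)"] assms(3) by auto
    then have "(\<lambda>j. T_op a b k (S e) j - complex_of_real (a n) * S e j) = e" using ec by blast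
    then have "T_op a b k (S e) n - complex_of_real (a n) * S e n = e n" by (rule fun_cong)
    then show False using b0 by (simp add: T_op_def diag_op_def e_def)
  qed
  have lim: "a \<longlonglongrightarrow> 0"
  proof (rule ccontr)
    assume "\<not> a \<longlonglongrightarrow> 0"
    then obtain \<delta> where d0: "\<delta> > 0" and dn: "\<forall>no. \<exists>n\<ge>no. \<not> a n < \<delta>"
      unfolding LIMSEQ_iff using assms(3) by (auto simp: abs_of_pos not_less)
    define N where "N = {n. a n \<ge> \<delta>}"
    have infN: "infinite N" unfolding infinite_nat_iff_unbounded_le N_def
      using dn by (auto simp: not_less)
    define f where "f = enumerate N"
    have smf: "strict_mono f" using infN by (simp add: f_def strict_mono_enumerate)
    have fN: "a (f i) \<ge> \<delta>" for i using enumerate_in_set[OF infN] by (simp add: f_def N_def)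
    have "bounded (range (a \<circ> f))" using assms(2) by (rule bounded_subset) auto
    then obtain l r where smr: "strict_mono r" and tl: "(a \<circ> f \<circ> r) \<longlonglongrightarrow> l"
      using bounded_imp_convergent_subsequence by blast
    have "\<delta> \<le> l" by (rule LIMSEQ_le_const[OF tl]) (use fN in auto)
    then have l0: "l > 0" using d0 by linarith
    define g where "g = f \<circ> r"
    have smg: "strict_mono g" unfolding g_def using smf smr by (rule strict_mono_o)
    obtain S where Sb: "bounded_op X S"
      and S1: "\<forall>x\<in>carrier_sp X. S (\<lambda>j. T_op a b k x j - complex_of_real l * x j) = x"
      using nsp[of "complex_of_real l"] l0 by auto
    obtain M where MB: "\<forall>x\<in>carrier_sp X. norm_sp X (S x) \<le> M * norm_sp X x"
      using Sb unfolding bounded_op_def by blast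
    define \<epsilon> where "\<epsilon> = 1 / (\<bar>M\<bar> + 1)"
    have e0: "\<epsilon> > 0" by (simp add: \<epsilon>_def add_pos_nonneg)
    obtain i0 where i0: "\<forall>i\<ge>i0. \<bar>a (g i) - l\<bar> < \<epsilon>"
      using tl e0 unfolding LIMSEQ_iff g_def by (auto simp: o_def)
    define n where "n = g i0"
    define m where "m = g (Suc i0)"
    have nm: "n \<noteq> m" using smg unfolding n_def m_def strict_mono_def
      by (metis lessI less_irrefl)
    obtain y where yc: "y \<in> carrier_sp X" and ky: "k y = 0"
      and ys: "\<forall>j. j \<notin> {n,m} \<longrightarrow> y j = 0" and ynz: "\<exists>j. y j \<noteq> 0"
      using ker_vec[OF bf nm] by blast
    define w where "w = (\<lambda>j. T_op a b k y j - complex_of_real l * y j)"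
    have wexp: "w j = complex_of_real (a j - l) * y j" for j
      by (simp add: w_def T_op_def diag_op_def ky algebra_simps)
    have wc: "w \<in> carrier_sp X" by (rule fin_carrier[of n m]) (use ys wexp in auto)
    have Sw: "S w = y" using S1 yc unfolding w_def by blast
    have ny: "norm_sp X y \<le> M * norm_sp X w" using bspec[OF MB wc] Sw by simp
    have wle: "\<forall>j. cmod (w j) \<le> \<epsilon> * cmod (y j)"
    proof
      fix j
      show "cmod (w j) \<le> \<epsilon> * cmod (y j)"
      proof (cases "j \<in> {n,m}")
        case True
        then have "\<bar>a j - l\<bar> < \<epsilon>" using i0 unfolding n_def m_def by auto
        then have "\<bar>a j - l\<bar> * cmod (y j) \<le> \<epsilon> * cmod (y j)"
          by (intro mult_right_mono) auto
        moreover have "cmod (complex_of_real (a j - l)) = \<bar>a j - l\<bar>" by (rule norm_of_real)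
        ultimately show ?thesis by (simp only: wexp norm_mult)
      next
        case False then show ?thesis using ys wexp by simp
      qed
    qed
    have nw: "norm_sp X w \<le> \<epsilon> * norm_sp X y"
      by (rule norm_mono_sp[OF assms(1) yc]) (use e0 wle in auto)
    have ypos: "norm_sp X y > 0" using ynz norm_pos[OF yc] by blast
    have wnn: "norm_sp X w \<ge> 0" using norm_nonneg_sp[OF wc] .
    show False
    proof (cases "M \<ge> 0")
      case True
      have "M * \<epsilon> < 1" using True by (simp add: \<epsilon>_def)
      have "norm_sp X y \<le> M * (\<epsilon> * norm_sp X y)"
        using ny nw True by (meson mult_left_mono order_trans)
      also have "\<dots> = (M * \<epsilon>) * norm_sp X y" by simp
      also have "\<dots> < norm_sp X y" using \<open>M * \<epsilon> < 1\<close> ypos by simp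
      finally show False by simp
    next
      case False
      then have "M * norm_sp X w \<le> 0" using wnn by (simp add: mult_nonpos_nonneg)
      then show False using ny ypos by linarith
    qed
  qed
  show ?thesis using lim dist bnz by blast
qed

end
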